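(* Let $0\le q\in L_1^{loc}(\mathbb{R})$ and $p\in[1,\infty)$, and suppose the equation $-y'(x)+q(x)y(x)=f(x)$, $x\in\mathbb{R}$, is correctly solvable in $L_p(\mathbb{R})$. For $x\in\mathbb{R}$ let $d(x)=\inf\{d>0:\int_{x-d}^{x+d}q(t)\,dt=2\}$. Then $d_0:=\sup_{x\in\mathbb{R}}d(x)<\infty$.
   Context: A solution is an absolutely continuous function satisfying the equation a.e. The equation is correctly solvable in $L_p(\mathbb{R})$ if for every $f\in L_p(\mathbb{R})$ there is a unique solution $y\in L_p(\mathbb{R})$, and there is a constant $c(p)\in(0,\infty)$ with $\|y\|_p\le c(p)\|f\|_p$ for all $f\in L_p(\mathbb{R})$. (Under these hypotheses $\int_{\mathbb{R}}q=\infty$, so $d(x)$ is well defined and finite.) *)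

theory Defs
  imports "HOL-Analysis.Analysis"
begin

definition abs_cont_on :: "real \<Rightarrow> real \<Rightarrow> (real \<Rightarrow> real) \<Rightarrow> bool" where
  "abs_cont_on lo hi g \<longleftrightarrow>
     (\<forall>\<epsilon>>0. \<exists>\<delta>>0. \<forall>(n::nat) (a::nat \<Rightarrow> real) (b::nat \<Rightarrow> real).
        (\<forall>i<n. lo \<le> a i \<and> a i \<le> b i \<and> b i \<le> hi) \<and>
        (\<forall>i<n. \<forall>j<n. i \<noteq> j \<longrightarrow> b i \<le> a j \<or> b j \<le> a i) \<and>
        (\<Sum>i<n. b i - a i) < \<delta>
        \<longrightarrow> (\<Sum>i<n. \<bar>g (b i) - g (a i)\<bar>) < \<epsilon>)"

definition abs_cont_real :: "(real \<Rightarrow> real) \<Rightarrow> bool" where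
  "abs_cont_real g \<longleftrightarrow> (\<forall>lo hi. abs_cont_on lo hi g)"

definition in_Lp :: "real \<Rightarrow> (real \<Rightarrow> real) \<Rightarrow> bool" where
  "in_Lp p g \<longleftrightarrow> g \<in> borel_measurable lebesgue \<and> integrable lebesgue (\<lambda>x. \<bar>g x\<bar> powr p)"

definition Lp_norm :: "real \<Rightarrow> (real \<Rightarrow> real) \<Rightarrow> real" where
  "Lp_norm p g = (\<integral>x. \<bar>g x\<bar> powr p \<partial>lebesgue) powr (1 / p)"

definition is_solution :: "(real \<Rightarrow> real) \<Rightarrow> (real \<Rightarrow> real) \<Rightarrow> (real \<Rightarrow> real) \<Rightarrow> bool" where
  "is_solution q f y \<longleftrightarrow> abs_cont_real y \<and>
     (AE x in lebesgue. \<exists>D. (y has_real_derivative D) (at x) \<and> - D + q x * y x = f x)"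

definition correctly_solvable :: "(real \<Rightarrow> real) \<Rightarrow> real \<Rightarrow> bool" where
  "correctly_solvable q p \<longleftrightarrow>
     (\<forall>f. in_Lp p f \<longrightarrow> (\<exists>!y. is_solution q f y \<and> in_Lp p y)) \<and>
     (\<exists>c>0. \<forall>f y. in_Lp p f \<and> is_solution q f y \<and> in_Lp p y \<longrightarrow> Lp_norm p y \<le> c * Lp_norm p f)"

definition d_fun :: "(real \<Rightarrow> real) \<Rightarrow> real \<Rightarrow> real" where
  "d_fun q x = Inf {d. d > 0 \<and> (\<integral>t\<in>{x-d..x+d}. q t \<partial>lebesgue) = 2}"

end

theory Submission
  imports Defs
begin
lemma trunc_lim:
  fixes g :: "real \<Rightarrow> real"
  assumes g: "integrable lebesgue g" and nn: "\<And>x. 0 \<le> g x" 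
  shows "(\<lambda>n::nat. \<integral>x. g x - min (g x) (real n) \<partial>lebesgue) \<longlonglongrightarrow> 0"
proof -
  have gm[measurable]: "g \<in> borel_measurable lebesgue" using g by auto
  have P4: "AE x in lebesgue. (\<lambda>n. g x - min (g x) (real n)) \<longlonglongrightarrow> 0"
    proof (rule AE_I2)
      fix x
      have "\<forall>\<^sub>F n in sequentially. g x - min (g x) (real n) = 0"
      proof (rule eventually_sequentiallyI[of "nat \<lceil>g x\<rceil>"])
        fix n assume "nat \<lceil>g x\<rceil> \<le> n"
        then have "g x \<le> real n" by linarith
        then show "g x - min (g x) (real n) = 0" by simp
      qed
      then show "(\<lambda>n. g x - min (g x) (real n)) \<longlonglongrightarrow> 0" by (rule tendsto_eventually)
    qed
  have P5: "\<And>i. AE x in lebesgue. norm (g x - min (g x) (real i)) \<le> g x"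
      using nn by (auto simp: min_def)
  have "(\<lambda>i. LINT x|lebesgue. g x - min (g x) (real i)) \<longlonglongrightarrow> LINT x|lebesgue. 0"
    using integral_dominated_convergence[where s="\<lambda>n x. g x - min (g x) (real n)" and f="\<lambda>x. 0" and w=g and M=lebesgue, OF _ _ g P4 P5]
    by simp
  then show ?thesis by simp
qed

lemma trunc_small:
  fixes g :: "real \<Rightarrow> real"
  assumes g: "integrable lebesgue g" and nn: "\<And>x. 0 \<le> g x" and e: "e > 0"
  shows "\<exists>N\<ge>0. (\<integral>x. g x - min (g x) N \<partial>lebesgue) < e"
proof -
  have gm[measurable]: "g \<in> borel_measurable lebesgue" using g by auto
  have "(\<lambda>n::nat. \<integral>x. g x - min (g x) (real n) \<partial>lebesgue) \<longlonglongrightarrow> 0" by (rule trunc_lim[OF g nn])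

  from order_tendstoD(2)[OF this e] obtain n::nat where "(\<integral>x. g x - min (g x) (real n) \<partial>lebesgue) < e"
    by (auto simp: eventually_sequentially)
  then show ?thesis by (intro exI[of _ "real n"]) auto
qed

lemma weighted_bound:
  fixes g h :: "real \<Rightarrow> real"
  assumes g: "integrable lebesgue g" and nn: "\<And>x. 0 \<le> g x"
    and hm: "h \<in> borel_measurable lebesgue" and h0: "\<And>x. 0 \<le> h x" and h1: "\<And>x. h x \<le> 1"
    and hi: "integrable lebesgue h" and N: "N \<ge> 0"
  shows "(\<integral>x. h x * g x \<partial>lebesgue) \<le> (\<integral>x. g x - min (g x) N \<partial>lebesgue) + N * (\<integral>x. h x \<partial>lebesgue)"
proof -
  have gm[measurable]: "g \<in> borel_measurable lebesgue" using g by auto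
  note hm[measurable]
  have i1: "integrable lebesgue (\<lambda>x. g x - min (g x) N)"
    by (rule Bochner_Integration.integrable_bound[OF g]) (use nn N in \<open>auto simp: min_def\<close>)
  have i2: "integrable lebesgue (\<lambda>x. h x * g x)"
    by (rule Bochner_Integration.integrable_bound[OF g]) (use nn h0 h1 in \<open>auto simp: abs_mult intro!: mult_left_le_one_le\<close>)
  have "(\<integral>x. h x * g x \<partial>lebesgue) \<le> (\<integral>x. (g x - min (g x) N) + N * h x \<partial>lebesgue)"
  proof (rule integral_mono[OF i2])
    show "integrable lebesgue (\<lambda>x. g x - min (g x) N + N * h x)" using i1 hi by auto
    fix x
    have "h x * g x = h x * min (g x) N + h x * (g x - min (g x) N)" by algebra
    also have "\<dots> \<le> N * h x + (g x - min (g x) N)"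
    proof -
      have "h x * min (g x) N \<le> h x * N" using h0 by (intro mult_left_mono) auto
      moreover have "h x * (g x - min (g x) N) \<le> 1 * (g x - min (g x) N)"
        using h1 by (intro mult_right_mono) auto
      ultimately show ?thesis by (simp add: mult.commute)
    qed
    finally show "h x * g x \<le> g x - min (g x) N + N * h x" by simp
  qed
  also have "\<dots> = (\<integral>x. g x - min (g x) N \<partial>lebesgue) + N * (\<integral>x. h x \<partial>lebesgue)"
    using i1 hi by simp
  finally show ?thesis .
qed

lemma lmeas_Ico[simp]: "{u..<v::real} \<in> lmeasurable"
  by (rule fmeasurableI2[of "{u..v}"]) auto

lemma ind_facts:
  assumes A: "A \<in> lmeasurable"
  shows "indicator A \<in> borel_measurable lebesgue" "integrable lebesgue (indicator A :: real \<Rightarrow> real)"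
    "(\<integral>x. indicator A x \<partial>lebesgue) = measure lebesgue A"
  using A by (auto simp: integrable_indicator_iff fmeasurable_def)

lemma weighted_bound_set:
  fixes g :: "real \<Rightarrow> real"
  assumes g: "integrable lebesgue g" and nn: "\<And>x. 0 \<le> g x" and A: "A \<in> lmeasurable" and N: "N \<ge> 0"
  shows "(\<integral>x. indicator A x * g x \<partial>lebesgue) \<le> (\<integral>x. g x - min (g x) N \<partial>lebesgue) + N * measure lebesgue A"
  using weighted_bound[OF g nn ind_facts(1)[OF A] _ _ ind_facts(2)[OF A] N] ind_facts(3)[OF A]
  by (simp add: indicator_def)

locale nnint =
  fixes g :: "real \<Rightarrow> real"
  assumes int: "integrable lebesgue g" and nn: "\<And>x. 0 \<le> g x"
begin

lemma gm[measurable]: "g \<in> borel_measurable lebesgue" using int by auto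

definition G :: "real \<Rightarrow> real" where
  "G t = (\<integral>x. indicator {..<t} x * g x \<partial>lebesgue)"

lemma int_ind: "A \<in> sets lebesgue \<Longrightarrow> integrable lebesgue (\<lambda>x. indicator A x * g x)"
  using integrable_mult_indicator[OF _ int] by simp

lemma G_diff: "u \<le> v \<Longrightarrow> G v - G u = (\<integral>x. indicator {u..<v} x * g x \<partial>lebesgue)"
proof -
  assume uv: "u \<le> v"
  have "(\<lambda>x. indicator {..<v} x * g x) = (\<lambda>x. indicator {..<u} x * g x + indicator {u..<v} x * g x)"
    using uv by (auto simp: fun_eq_iff split: split_indicator)
  then have "G v = G u + (\<integral>x. indicator {u..<v} x * g x \<partial>lebesgue)"
    unfolding G_def by (simp add: Bochner_Integration.integral_add int_ind)
  then show ?thesis by simp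
qed

lemma int_ind_nonneg: "0 \<le> (\<integral>x. indicator A x * g x \<partial>lebesgue)"
  by (rule integral_nonneg_AE) (auto simp: nn)

lemma int_ind_le: "(\<integral>x. indicator A x * g x \<partial>lebesgue) \<le> (\<integral>x. g x \<partial>lebesgue)"
  if "A \<in> sets lebesgue"
  by (rule integral_mono[OF int_ind[OF that] int]) (auto simp: nn indicator_def)

lemma G_mono: "u \<le> v \<Longrightarrow> G u \<le> G v"
  using G_diff[of u v] int_ind_nonneg[of "{u..<v}"] by simp

lemma G_nonneg: "0 \<le> G t" unfolding G_def by (rule int_ind_nonneg)

lemma G_le: "G t \<le> (\<integral>x. g x \<partial>lebesgue)" unfolding G_def by (rule int_ind_le) simp

lemma G_bound: "u \<le> v \<Longrightarrow> N \<ge> 0 \<Longrightarrow> G v - G u \<le> (\<integral>x. g x - min (g x) N \<partial>lebesgue) + N * (v - u)"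
proof -
  assume uv: "u \<le> v" and N: "N \<ge> 0"
  have "G v - G u \<le> (\<integral>x. g x - min (g x) N \<partial>lebesgue) + N * measure lebesgue {u..<v}"
    unfolding G_diff[OF uv]
    by (rule weighted_bound_set[OF int nn _ N]) simp
  then show ?thesis using uv by simp
qed

lemma G_cont: "isCont G x"
unfolding isCont_def LIM_eq
proof (intro allI impI)
  fix e :: real assume e: "e > 0"
  obtain N where N: "N \<ge> 0" "(\<integral>x. g x - min (g x) N \<partial>lebesgue) < e/2"
    using trunc_small[OF int nn, of "e/2"] e by auto
  define d where "d = e / (2 * (N + 1))"
  have d: "d > 0" using e N by (simp add: d_def)
  have Nd: "N * d < e / 2"
  proof -
    have "N * d = e/2 * (N / (N+1))" using N by (simp add: d_def field_simps)
    also have "\<dots> < e/2 * 1" using e N by (intro mult_strict_left_mono) auto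
    finally show ?thesis by simp
  qed
  show "\<exists>s>0. \<forall>z. z \<noteq> x \<and> norm (z - x) < s \<longrightarrow> norm (G z - G x) < e"
  proof (intro exI[of _ d] conjI allI impI d)
    fix z :: real assume z: "z \<noteq> x \<and> norm (z - x) < d"
    define y where "y = z - x"
    have y: "norm y < d" and zy: "z = x + y" using z by (auto simp: y_def)
    have "\<bar>G (x + y) - G x\<bar> \<le> (\<integral>x. g x - min (g x) N \<partial>lebesgue) + N * \<bar>y\<bar>"
    proof (cases "y \<ge> 0")
      case True
      then show ?thesis using G_bound[of x "x+y" N] G_mono[of x "x+y"] N by auto
    next
      case False
      then show ?thesis using G_bound[of "x+y" x N] G_mono[of "x+y" x] N by auto
    qed
    also have "\<dots> < e/2 + N * d"
      using N y by (intro add_strict_left_mono add_less_le_mono mult_left_mono) auto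
    also have "\<dots> < e" using Nd by simp
    finally show "norm (G z - G x) < e" by (simp add: zy)
  qed
qed

end

context nnint begin

lemma int_Icc_Ico: "(\<integral>x. indicator {u..v} x * g x \<partial>lebesgue) = (\<integral>x. indicator {u..<v} x * g x \<partial>lebesgue)"
proof (rule integral_cong_AE)
  have "{v} \<in> null_sets lebesgue" by (simp add: negligible_iff_null_sets[symmetric])
  from AE_not_in[OF this] show "AE x in lebesgue. indicator {u..v} x * g x = indicator {u..<v} x * g x"
    by eventually_elim (auto split: split_indicator)
qed (auto intro!: borel_measurable_integrable int_ind)

lemma Gdiff_Icc: "u \<le> v \<Longrightarrow> (\<integral>x. indicator {u..v} x * g x \<partial>lebesgue) = G v - G u"
  by (simp add: int_Icc_Ico G_diff)

lemma dens_eq: "A \<in> sets lebesgue \<Longrightarrow>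
   emeasure (density lebesgue (\<lambda>x. ennreal (g x))) A = ennreal (\<integral>x. indicator A x * g x \<partial>lebesgue)"
proof -
  assume A: "A \<in> sets lebesgue"
  have "emeasure (density lebesgue (\<lambda>x. ennreal (g x))) A = (\<integral>\<^sup>+x. ennreal (indicator A x * g x) \<partial>lebesgue)"
    using A by (subst emeasure_density) (auto intro!: nn_integral_cong split: split_indicator)
  also have "\<dots> = ennreal (\<integral>x. indicator A x * g x \<partial>lebesgue)"
    by (rule nn_integral_eq_integral[OF int_ind[OF A]]) (auto simp: nn)
  finally show ?thesis .
qed

lemma vitali_sums:
  fixes C :: "(real \<times> real) set"
  assumes C: "countable C" and disj: "pairwise (\<lambda>i j. disjnt {fst i..snd i} {fst j..snd j}) C"
    and lt: "\<And>i. i\<in>C \<Longrightarrow> fst i < snd i"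
  shows "emeasure lebesgue (\<Union>i\<in>C. {fst i..snd i}) = (\<integral>\<^sup>+ i. ennreal (snd i - fst i) \<partial>count_space C)"
    and "emeasure (density lebesgue (\<lambda>x. ennreal (g x))) (\<Union>i\<in>C. {fst i..snd i})
          = (\<integral>\<^sup>+ i. ennreal (G (snd i) - G (fst i)) \<partial>count_space C)"
proof -
  have df: "disjoint_family_on (\<lambda>i. {fst i..snd i}) C"
    using disj unfolding disjoint_family_on_def pairwise_def disjnt_def by auto
  have "emeasure lebesgue (\<Union>i\<in>C. {fst i..snd i}) = (\<integral>\<^sup>+ i. emeasure lebesgue {fst i..snd i} \<partial>count_space C)"
    by (rule emeasure_UN_countable[OF _ C df]) auto
  also have "\<dots> = (\<integral>\<^sup>+ i. ennreal (snd i - fst i) \<partial>count_space C)"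
  proof (rule nn_integral_cong)
    fix i assume "i \<in> space (count_space C)"
    then have "i \<in> C" by simp
    then have "fst i < snd i" by (rule lt)
    then show "emeasure lebesgue {fst i..snd i} = ennreal (snd i - fst i)" by simp
  qed
  finally show "emeasure lebesgue (\<Union>i\<in>C. {fst i..snd i}) = (\<integral>\<^sup>+ i. ennreal (snd i - fst i) \<partial>count_space C)" .
  have "emeasure (density lebesgue (\<lambda>x. ennreal (g x))) (\<Union>i\<in>C. {fst i..snd i})
     = (\<integral>\<^sup>+ i. emeasure (density lebesgue (\<lambda>x. ennreal (g x))) {fst i..snd i} \<partial>count_space C)"
    by (rule emeasure_UN_countable[OF _ C df]) auto
  also have "\<dots> = (\<integral>\<^sup>+ i. ennreal (G (snd i) - G (fst i)) \<partial>count_space C)"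
  proof (rule nn_integral_cong)
    fix i assume "i \<in> space (count_space C)"
    then have "i \<in> C" by simp
    then have "fst i < snd i" by (rule lt)
    then show "emeasure (density lebesgue (\<lambda>x. ennreal (g x))) {fst i..snd i} = ennreal (G (snd i) - G (fst i))"
      by (simp add: dens_eq Gdiff_Icc)
  qed
  finally show "emeasure (density lebesgue (\<lambda>x. ennreal (g x))) (\<Union>i\<in>C. {fst i..snd i})
          = (\<integral>\<^sup>+ i. ennreal (G (snd i) - G (fst i)) \<partial>count_space C)" .
qed

lemma U_sets: "countable C \<Longrightarrow> (\<Union>i\<in>C. {fst i..snd i::real}) \<in> sets lebesgue"
  by (rule sets.countable_UN') auto

lemma up_sum:
  fixes C :: "(real \<times> real) set"
  assumes C: "countable C" and disj: "pairwise (\<lambda>i j. disjnt {fst i..snd i} {fst j..snd j}) C"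
    and lt: "\<And>i. i\<in>C \<Longrightarrow> fst i < snd i"
    and fin: "(\<Union>i\<in>C. {fst i..snd i}) \<in> lmeasurable"
    and s: "s \<ge> 0" and ineq: "\<And>i. i\<in>C \<Longrightarrow> s * (snd i - fst i) \<le> G (snd i) - G (fst i)"
  shows "s * measure lebesgue (\<Union>i\<in>C. {fst i..snd i}) \<le> (\<integral>x. indicator (\<Union>i\<in>C. {fst i..snd i}) x * g x \<partial>lebesgue)"
proof -
  let ?U = "\<Union>i\<in>C. {fst i..snd i}"
  have "ennreal s * emeasure lebesgue ?U = (\<integral>\<^sup>+ i. ennreal s * ennreal (snd i - fst i) \<partial>count_space C)"
    by (simp add: vitali_sums(1)[OF C disj lt] nn_integral_cmult)
  also have "\<dots> \<le> (\<integral>\<^sup>+ i. ennreal (G (snd i) - G (fst i)) \<partial>count_space C)"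
  proof (rule nn_integral_mono)
    fix i assume "i \<in> space (count_space C)"
    then have "i \<in> C" by simp
    then show "ennreal s * ennreal (snd i - fst i) \<le> ennreal (G (snd i) - G (fst i))"
      using ineq[of i] s by (simp add: ennreal_mult'[symmetric] ennreal_leI)
  qed
  also have "\<dots> = ennreal (\<integral>x. indicator ?U x * g x \<partial>lebesgue)"
    using vitali_sums(2)[OF C disj lt] dens_eq[OF U_sets[OF C]] by simp
  finally have "ennreal (s * measure lebesgue ?U) \<le> ennreal (\<integral>x. indicator ?U x * g x \<partial>lebesgue)"
    using fin s by (simp add: emeasure_eq_measure2 ennreal_mult')
  then show ?thesis by (simp add: ennreal_le_iff int_ind_nonneg)
qed

lemma lo_sum:
  fixes C :: "(real \<times> real) set"
  assumes C: "countable C" and disj: "pairwise (\<lambda>i j. disjnt {fst i..snd i} {fst j..snd j}) C"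
    and lt: "\<And>i. i\<in>C \<Longrightarrow> fst i < snd i"
    and fin: "(\<Union>i\<in>C. {fst i..snd i}) \<in> lmeasurable"
    and s: "s \<ge> 0" and ineq: "\<And>i. i\<in>C \<Longrightarrow> G (snd i) - G (fst i) \<le> s * (snd i - fst i)"
  shows "(\<integral>x. indicator (\<Union>i\<in>C. {fst i..snd i}) x * g x \<partial>lebesgue) \<le> s * measure lebesgue (\<Union>i\<in>C. {fst i..snd i})"
proof -
  let ?U = "\<Union>i\<in>C. {fst i..snd i}"
  have "ennreal (\<integral>x. indicator ?U x * g x \<partial>lebesgue) = (\<integral>\<^sup>+ i. ennreal (G (snd i) - G (fst i)) \<partial>count_space C)"
    using vitali_sums(2)[OF C disj lt] dens_eq[OF U_sets[OF C]] by simp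
  also have "\<dots> \<le> (\<integral>\<^sup>+ i. ennreal s * ennreal (snd i - fst i) \<partial>count_space C)"
  proof (rule nn_integral_mono)
    fix i assume "i \<in> space (count_space C)"
    then have "i \<in> C" by simp
    then show "ennreal (G (snd i) - G (fst i)) \<le> ennreal s * ennreal (snd i - fst i)"
      using ineq[of i] s lt[of i] by (simp add: ennreal_mult'[symmetric] ennreal_leI)
  qed
  also have "\<dots> = ennreal s * emeasure lebesgue ?U"
    by (simp add: vitali_sums(1)[OF C disj lt] nn_integral_cmult)
  finally have "ennreal (\<integral>x. indicator ?U x * g x \<partial>lebesgue) \<le> ennreal (s * measure lebesgue ?U)"
    using fin s by (simp add: emeasure_eq_measure2 ennreal_mult')
  then show ?thesis using s by (simp add: ennreal_le_iff)
qed

end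

lemma open_W: "open {x::real. \<exists>u v. u < x \<and> x < v \<and> P u v}"
proof -
  have "{x::real. \<exists>u v. u < x \<and> x < v \<and> P u v} = (\<Union>p\<in>{p. P (fst p) (snd p)}. {fst p<..<snd p})"
    by fastforce
  then show ?thesis by (auto intro!: open_UN)
qed

lemma cball_pair: "cball ((fst i + snd i)/2) ((snd i - fst i)/2) = {fst i..snd (i::real\<times>real)}"
proof -
  have "(fst i + snd i)/2 - (snd i - fst i)/2 = fst i" "(fst i + snd i)/2 + (snd i - fst i)/2 = snd i"
    by (simp_all add: field_simps)
  then show ?thesis by (simp add: cball_eq_atLeastAtMost)
qed

context nnint begin

definition Wup :: "real \<Rightarrow> real \<Rightarrow> real set" where
  "Wup s d = {x. \<exists>u v. u < x \<and> x < v \<and> (v - u < d \<and> s * (v - u) < G v - G u)}"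
definition Wlo :: "real \<Rightarrow> real \<Rightarrow> real set" where
  "Wlo r d = {x. \<exists>u v. u < x \<and> x < v \<and> (v - u < d \<and> G v - G u < r * (v - u))}"
definition "Bup s = (\<Inter>n. Wup s (inverse (real (Suc n))))"
definition "Blo r = (\<Inter>n. Wlo r (inverse (real (Suc n))))"
definition "Eup r s k = {x. g x < r} \<inter> Bup s \<inter> ball 0 (real k)"
definition "Elo r s k = {x. s < g x} \<inter> Blo r \<inter> ball 0 (real k)"

lemma lt_sets: "{x. g x < r} \<in> sets lebesgue" "{x. s < g x} \<in> sets lebesgue"
proof -
  have "{x \<in> space lebesgue. g x < r} \<in> sets lebesgue" "{x \<in> space lebesgue. s < g x} \<in> sets lebesgue"
    by measurable
  then show "{x. g x < r} \<in> sets lebesgue" "{x. s < g x} \<in> sets lebesgue" by simp_all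
qed

lemma Bup_sets: "Bup s \<in> sets lebesgue"
proof -
  have "\<And>n. open (Wup s (inverse (real (Suc n))))" unfolding Wup_def by (rule open_W)
  then show ?thesis unfolding Bup_def by (intro sets.countable_INT') auto
qed

lemma Blo_sets: "Blo s \<in> sets lebesgue"
proof -
  have "\<And>n. open (Wlo s (inverse (real (Suc n))))" unfolding Wlo_def by (rule open_W)
  then show ?thesis unfolding Blo_def by (intro sets.countable_INT') auto
qed

lemma Eup_lmeas: "Eup r s k \<in> lmeasurable"
proof (rule fmeasurableI2[of "ball 0 (real k)"])
  show "Eup r s k \<in> sets lebesgue" unfolding Eup_def using Bup_sets
    by (intro sets.Int lt_sets) auto
qed (auto simp: Eup_def)

lemma Elo_lmeas: "Elo r s k \<in> lmeasurable"
proof (rule fmeasurableI2[of "ball 0 (real k)"])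
  show "Elo r s k \<in> sets lebesgue" unfolding Elo_def using Blo_sets
    by (intro sets.Int lt_sets) auto
qed (auto simp: Elo_def)

end

lemma small_Archimedean: "(d::real) > 0 \<Longrightarrow> \<exists>n. inverse (real (Suc n)) < d"
  using reals_Archimedean by blast

lemma measure_zero_from_eps:
  assumes c: "c > 0" and m: "(m::real) \<ge> 0" and h: "\<And>e. e > 0 \<Longrightarrow> c * m \<le> e"
  shows "m = 0"
proof (rule ccontr)
  assume "m \<noteq> 0" then have "c * m > 0" using c m by simp
  with h[of "c*m/2"] show False by simp
qed

context nnint begin

lemma outer_open_bounded:
  assumes E: "E \<in> sets lebesgue" and Eb: "E \<subseteq> ball 0 (real k)" and eta: "\<eta> > 0"
  obtains Op where "open Op" "E \<subseteq> Op" "Op \<in> lmeasurable" "Op - E \<in> lmeasurable" "measure lebesgue (Op - E) < \<eta>"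
proof -
  obtain T where T: "open T" "E \<subseteq> T" "T - E \<in> lmeasurable" "emeasure lebesgue (T - E) < ennreal \<eta>"
    using sets_lebesgue_outer_open[OF E eta] by blast
  define Op where "Op = T \<inter> ball 0 (real k + 1)"
  have oOp: "open Op" using T by (auto simp: Op_def)
  have EOp: "E \<subseteq> Op" using T Eb by (auto simp: Op_def)
  have Ol: "Op \<in> lmeasurable" using oOp by (intro lmeasurable_open) (auto simp: Op_def bounded_Int)
  have OEs: "Op - E \<in> sets lebesgue" using oOp E by auto
  have OE: "Op - E \<in> lmeasurable" by (rule fmeasurableI2[OF T(3)]) (use OEs in \<open>auto simp: Op_def\<close>)
  have "measure lebesgue (Op - E) \<le> measure lebesgue (T - E)"
    by (rule measure_mono_fmeasurable[OF _ OEs T(3)]) (auto simp: Op_def)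
  also have "measure lebesgue (T - E) < \<eta>"
    using T(4) T(3) eta by (simp add: emeasure_eq_measure2 ennreal_less_iff)
  finally show ?thesis using that oOp EOp Ol OE by blast
qed

lemma vitali_apply:
  fixes E Op :: "real set" and P :: "real \<Rightarrow> real \<Rightarrow> bool"
  assumes E: "E \<subseteq> Op" and oOp: "open Op"
    and cover: "\<And>x d. x \<in> E \<Longrightarrow> d > 0 \<Longrightarrow> \<exists>u v. u < x \<and> x < v \<and> v - u < d \<and> P u v"
  obtains C where "countable C" "\<And>i. i \<in> C \<Longrightarrow> fst i < snd i \<and> {fst i..snd i} \<subseteq> Op \<and> P (fst i) (snd i)"
     "pairwise (\<lambda>i j. disjnt {fst i..snd i} {fst j..snd j}) C"
     "negligible (E - (\<Union>i\<in>C. {fst i..snd i}))"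
proof -
  define K where "K = {i. fst i < snd i \<and> {fst i..snd i} \<subseteq> Op \<and> P (fst i) (snd i)}"
  define a where "a = (\<lambda>i::real\<times>real. (fst i + snd i)/2)"
  define rr where "rr = (\<lambda>i::real\<times>real. (snd i - fst i)/2)"
  have cb: "\<And>i::real\<times>real. cball (a i) (rr i) = {fst i..snd i}" by (simp add: a_def rr_def cball_pair)
  have pos: "\<And>i. i \<in> K \<Longrightarrow> 0 < rr i" by (auto simp: K_def rr_def)
  have cov: "\<exists>i::real\<times>real. i \<in> K \<and> x \<in> cball (a i) (rr i) \<and> rr i < d" if x: "x \<in> E" and d: "0 < d" for x d
  proof -
    obtain \<rho> where \<rho>: "\<rho> > 0" "ball x \<rho> \<subseteq> Op" using oOp E x open_contains_ball by blast
    obtain u v where uv: "u < x" "x < v" "v - u < min d \<rho>" "P u v"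
      using cover[OF x, of "min d \<rho>"] d \<rho> by auto
    have "{u..v} \<subseteq> ball x \<rho>" using uv by (auto simp: dist_real_def)
    then have "(u, v) \<in> K" using uv \<rho> by (auto simp: K_def)
    moreover have "x \<in> cball (a (u,v)) (rr (u,v))" using uv by (simp add: cb)
    moreover have "rr (u,v) < d" using uv by (simp add: rr_def)
    ultimately show ?thesis by blast
  qed
  obtain C where C: "countable C" "C \<subseteq> K"
     "pairwise (\<lambda>i j. disjnt (cball (a i) (rr i)) (cball (a j) (rr j))) C"
     "negligible(E - (\<Union>i \<in> C. cball (a i) (rr i)))"
    using Vitali_covering_theorem_cballs[of K rr E a, OF pos cov] by blast
  show ?thesis
  proof (rule that[OF C(1)])
    show "\<And>i. i \<in> C \<Longrightarrow> fst i < snd i \<and> {fst i..snd i} \<subseteq> Op \<and> P (fst i) (snd i)"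
      using C(2) by (auto simp: K_def)
    show "pairwise (\<lambda>i j. disjnt {fst i..snd i} {fst j..snd j}) C" using C(3) by (simp add: cb)
    show "negligible (E - (\<Union>i\<in>C. {fst i..snd i}))" using C(4) by (simp add: cb)
  qed
qed

end

context nnint begin

lemma nu_split: "E \<subseteq> Op \<Longrightarrow> E \<in> sets lebesgue \<Longrightarrow> Op \<in> sets lebesgue \<Longrightarrow>
  (\<integral>x. indicator Op x * g x \<partial>lebesgue) = (\<integral>x. indicator E x * g x \<partial>lebesgue) + (\<integral>x. indicator (Op - E) x * g x \<partial>lebesgue)"
proof -
  assume EO: "E \<subseteq> Op" and Es: "E \<in> sets lebesgue" and Os: "Op \<in> sets lebesgue"
  have "(\<lambda>x. indicator Op x * g x) = (\<lambda>x. indicator E x * g x + indicator (Op - E) x * g x)"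
    using EO by (auto simp: fun_eq_iff split: split_indicator)
  then show ?thesis using Es Os by (simp add: Bochner_Integration.integral_add int_ind)
qed

lemma nu_mono: "A \<subseteq> B \<Longrightarrow> A \<in> sets lebesgue \<Longrightarrow> B \<in> sets lebesgue \<Longrightarrow>
  (\<integral>x. indicator A x * g x \<partial>lebesgue) \<le> (\<integral>x. indicator B x * g x \<partial>lebesgue)"
  by (rule integral_mono[OF int_ind int_ind]) (auto simp: nn split: split_indicator)

lemma neg_up:
  assumes r: "0 < r" and rs: "r < s"
  shows "negligible (Eup r s k)"
proof -
  let ?E = "Eup r s k"
  have Es: "?E \<in> sets lebesgue" and Ef: "?E \<in> lmeasurable" using Eup_lmeas by auto
  have key: "(s - r) * measure lebesgue ?E \<le> e" if e: "e > 0" for e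
  proof -
    obtain N where N: "N \<ge> 0" "(\<integral>x. g x - min (g x) N \<partial>lebesgue) < e/2"
      using trunc_small[OF int nn, of "e/2"] e by auto
    define \<eta> where "\<eta> = e / (2 * (N + 1))"
    have eta: "\<eta> > 0" using e N by (simp add: \<eta>_def)
    have Neta: "N * \<eta> < e / 2"
    proof -
      have "N * \<eta> = e/2 * (N / (N+1))" using N by (simp add: \<eta>_def field_simps)
      also have "\<dots> < e/2 * 1" using e N by (intro mult_strict_left_mono) auto
      finally show ?thesis by simp
    qed
    obtain Op where Op: "open Op" "?E \<subseteq> Op" "Op \<in> lmeasurable" "Op - ?E \<in> lmeasurable"
        "measure lebesgue (Op - ?E) < \<eta>"
      using outer_open_bounded[OF Es _ eta, of k] by (auto simp: Eup_def)
    have nuOE: "(\<integral>x. indicator (Op - ?E) x * g x \<partial>lebesgue) < e"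
    proof -
      have "(\<integral>x. indicator (Op - ?E) x * g x \<partial>lebesgue) \<le> (\<integral>x. g x - min (g x) N \<partial>lebesgue) + N * measure lebesgue (Op - ?E)"
        by (rule weighted_bound_set[OF int nn Op(4) N(1)])
      also have "\<dots> \<le> (\<integral>x. g x - min (g x) N \<partial>lebesgue) + N * \<eta>"
        using Op(5) N(1) by (intro add_left_mono mult_left_mono) auto
      also have "\<dots> < e" using N(2) Neta by simp
      finally show ?thesis .
    qed
    have nuE: "(\<integral>x. indicator ?E x * g x \<partial>lebesgue) \<le> r * measure lebesgue ?E"
    proof -
      have "(\<integral>x. indicator ?E x * g x \<partial>lebesgue) \<le> (\<integral>x. r * indicator ?E x \<partial>lebesgue)"
        using Ef ind_facts(2)[OF Ef] by (intro integral_mono int_ind) (auto simp: Eup_def split: split_indicator)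
      also have "\<dots> = r * measure lebesgue ?E" using ind_facts(2,3)[OF Ef] by simp
      finally show ?thesis .
    qed
    have cover: "\<exists>u v. u < x \<and> x < v \<and> v - u < d \<and> s * (v - u) < G v - G u"
      if x: "x \<in> ?E" and d: "d > 0" for x d
    proof -
      obtain n where n: "inverse (real (Suc n)) < d" using small_Archimedean[OF d] by blast
      have "x \<in> Wup s (inverse (real (Suc n)))" using x by (auto simp: Eup_def Bup_def)
      then show ?thesis using n unfolding Wup_def by force
    qed
    obtain C where C: "countable C" "\<And>i. i \<in> C \<Longrightarrow> fst i < snd i \<and> {fst i..snd i} \<subseteq> Op \<and> s * (snd i - fst i) < G (snd i) - G (fst i)"
       "pairwise (\<lambda>i j. disjnt {fst i..snd i} {fst j..snd j}) C"
       "negligible (?E - (\<Union>i\<in>C. {fst i..snd i}))"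
      using vitali_apply[OF Op(2) Op(1), of "\<lambda>u v. s * (v - u) < G v - G u", OF cover] by blast
    let ?U = "\<Union>i\<in>C. {fst i..snd i}"
    have Us: "?U \<in> sets lebesgue" by (rule U_sets[OF C(1)])
    have UO: "?U \<subseteq> Op" using C(2) by auto
    have Ul: "?U \<in> lmeasurable" by (rule fmeasurableI2[OF Op(3) UO Us])
    have mEU: "measure lebesgue ?E \<le> measure lebesgue ?U"
    proof -
      have null: "?E - ?U \<in> null_sets lebesgue" using C(4) by (simp add: negligible_iff_null_sets)
      have "measure lebesgue ?E \<le> measure lebesgue (?U \<union> (?E - ?U))"
        by (rule measure_mono_fmeasurable[OF _ Es]) (use Ul null Ef in \<open>auto intro: fmeasurable.Un\<close>)
      also have "\<dots> = measure lebesgue ?U" by (rule measure_Un_null_set[OF Us null])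
      finally show ?thesis .
    qed
    have sU: "s * measure lebesgue ?U \<le> (\<integral>x. indicator ?U x * g x \<partial>lebesgue)"
      by (rule up_sum[OF C(1) C(3) _ Ul]) (use C(2) rs r in \<open>auto intro: less_imp_le\<close>)
    have "s * measure lebesgue ?E \<le> s * measure lebesgue ?U"
      using mEU rs r by (intro mult_left_mono) auto
    also have "\<dots> \<le> (\<integral>x. indicator ?U x * g x \<partial>lebesgue)" by (rule sU)
    also have "\<dots> \<le> (\<integral>x. indicator Op x * g x \<partial>lebesgue)" by (rule nu_mono[OF UO Us]) (use Op in auto)
    also have "\<dots> = (\<integral>x. indicator ?E x * g x \<partial>lebesgue) + (\<integral>x. indicator (Op - ?E) x * g x \<partial>lebesgue)"
      by (rule nu_split[OF Op(2) Es]) (use Op in auto)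
    also have "\<dots> < r * measure lebesgue ?E + e" using nuE nuOE by simp
    finally show ?thesis by (simp add: algebra_simps)
  qed
  have "measure lebesgue ?E = 0"
    by (rule measure_zero_from_eps[of "s - r"]) (use rs key in auto)
  then show ?thesis using Ef by (simp add: negligible_iff_measure)
qed

end

context nnint begin

lemma neg_lo:
  assumes r: "0 < r" and rs: "r < s"
  shows "negligible (Elo r s k)"
proof -
  let ?E = "Elo r s k"
  have Es: "?E \<in> sets lebesgue" and Ef: "?E \<in> lmeasurable" using Elo_lmeas by auto
  have key: "(s - r) * measure lebesgue ?E \<le> r * e" if e: "e > 0" for e
  proof -
    obtain Op where Op: "open Op" "?E \<subseteq> Op" "Op \<in> lmeasurable" "Op - ?E \<in> lmeasurable"
        "measure lebesgue (Op - ?E) < e"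
      using outer_open_bounded[OF Es _ e, of k] by (auto simp: Elo_def)
    have nuE: "s * measure lebesgue ?E \<le> (\<integral>x. indicator ?E x * g x \<partial>lebesgue)"
    proof -
      have "s * measure lebesgue ?E = (\<integral>x. s * indicator ?E x \<partial>lebesgue)" using ind_facts(2,3)[OF Ef] by simp
      also have "\<dots> \<le> (\<integral>x. indicator ?E x * g x \<partial>lebesgue)"
        using Ef ind_facts(2)[OF Ef] by (intro integral_mono int_ind) (auto simp: Elo_def split: split_indicator)
      finally show ?thesis .
    qed
    have cover: "\<exists>u v. u < x \<and> x < v \<and> v - u < d \<and> G v - G u < r * (v - u)"
      if x: "x \<in> ?E" and d: "d > 0" for x d
    proof -
      obtain n where n: "inverse (real (Suc n)) < d" using small_Archimedean[OF d] by blast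
      have "x \<in> Wlo r (inverse (real (Suc n)))" using x by (auto simp: Elo_def Blo_def)
      then show ?thesis using n unfolding Wlo_def by force
    qed
    obtain C where C: "countable C" "\<And>i. i \<in> C \<Longrightarrow> fst i < snd i \<and> {fst i..snd i} \<subseteq> Op \<and> G (snd i) - G (fst i) < r * (snd i - fst i)"
       "pairwise (\<lambda>i j. disjnt {fst i..snd i} {fst j..snd j}) C"
       "negligible (?E - (\<Union>i\<in>C. {fst i..snd i}))"
      using vitali_apply[OF Op(2) Op(1), of "\<lambda>u v. G v - G u < r * (v - u)", OF cover] by blast
    let ?U = "\<Union>i\<in>C. {fst i..snd i}"
    have Us: "?U \<in> sets lebesgue" by (rule U_sets[OF C(1)])
    have UO: "?U \<subseteq> Op" using C(2) by auto
    have Ul: "?U \<in> lmeasurable" by (rule fmeasurableI2[OF Op(3) UO Us])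
    have nuEU: "(\<integral>x. indicator ?E x * g x \<partial>lebesgue) \<le> (\<integral>x. indicator ?U x * g x \<partial>lebesgue)"
    proof (rule integral_mono_AE[OF int_ind[OF Es] int_ind[OF Us]])
      have null: "?E - ?U \<in> null_sets lebesgue" using C(4) by (simp add: negligible_iff_null_sets)
      from AE_not_in[OF null] show "AE x in lebesgue. indicator ?E x * g x \<le> indicator ?U x * g x"
        by eventually_elim (auto simp: nn split: split_indicator)
    qed
    have rU: "(\<integral>x. indicator ?U x * g x \<partial>lebesgue) \<le> r * measure lebesgue ?U"
      by (rule lo_sum[OF C(1) C(3) _ Ul]) (use C(2) r in \<open>auto intro: less_imp_le\<close>)
    have mUO: "measure lebesgue ?U \<le> measure lebesgue Op"
      by (rule measure_mono_fmeasurable[OF UO Us Op(3)])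
    have mO: "measure lebesgue Op = measure lebesgue ?E + measure lebesgue (Op - ?E)"
    proof -
      have "measure lebesgue (Op - ?E) = measure lebesgue Op - measure lebesgue ?E"
        by (rule measure_Diff) (use Op(3) Es Op(2) in \<open>auto simp: fmeasurable_def\<close>)
      then show ?thesis by simp
    qed
    have "s * measure lebesgue ?E \<le> r * measure lebesgue ?U" using nuE nuEU rU by linarith
    also have "\<dots> \<le> r * measure lebesgue Op" using mUO r by (intro mult_left_mono) auto
    also have "\<dots> \<le> r * (measure lebesgue ?E + e)" using mO Op(5) r by (intro mult_left_mono) auto
    finally show ?thesis by (simp add: algebra_simps)
  qed
  have "measure lebesgue ?E = 0"
  proof (rule measure_zero_from_eps[of "(s - r)/r"])
    fix e :: real assume e: "e > 0"
    have "(s - r) * measure lebesgue ?E \<le> r * e" using key[of e] e by simp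
    then show "(s - r) / r * measure lebesgue ?E \<le> e" using r by (simp add: field_simps)
  qed (use rs r in auto)
  then show ?thesis using Ef by (simp add: negligible_iff_measure)
qed

end

lemma lim_le_right:
  fixes f h :: "real \<Rightarrow> real"
  assumes "isCont f x" "isCont h x" "eventually (\<lambda>t. f t \<le> h t) (at_right x)"
  shows "f x \<le> h x"
proof (rule tendsto_le[OF trivial_limit_at_right_real])
  show "(h \<longlongrightarrow> h x) (at_right x)" using assms(2) unfolding isCont_def
    by (rule tendsto_mono[OF at_le, rotated]) simp
  show "(f \<longlongrightarrow> f x) (at_right x)" using assms(1) unfolding isCont_def
    by (rule tendsto_mono[OF at_le, rotated]) simp
qed (use assms(3) in auto)

lemma lim_le_left:
  fixes f h :: "real \<Rightarrow> real"
  assumes "isCont f x" "isCont h x" "eventually (\<lambda>t. f t \<le> h t) (at_left x)"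
  shows "f x \<le> h x"
proof (rule tendsto_le[OF trivial_limit_at_left_real])
  show "(h \<longlongrightarrow> h x) (at_left x)" using assms(2) unfolding isCont_def
    by (rule tendsto_mono[OF at_le, rotated]) simp
  show "(f \<longlongrightarrow> f x) (at_left x)" using assms(1) unfolding isCont_def
    by (rule tendsto_mono[OF at_le, rotated]) simp
qed (use assms(3) in auto)

context nnint begin

lemma deriv_pt:
  assumes H: "\<And>r s k. r \<in> \<rat> \<Longrightarrow> s \<in> \<rat> \<Longrightarrow> 0 < r \<Longrightarrow> r < s \<Longrightarrow> x \<notin> Eup r s k \<and> x \<notin> Elo r s k"
  shows "(G has_real_derivative g x) (at x)"
proof -
  obtain k :: nat where k: "\<bar>x\<bar> < real k" using reals_Archimedean2 by blast
  have xb: "x \<in> ball 0 (real k)" using k by (simp add: dist_real_def)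
  have up: "\<exists>\<delta>>0. \<forall>u v. u < x \<longrightarrow> x < v \<longrightarrow> v - u < \<delta> \<longrightarrow> G v - G u \<le> s' * (v - u)"
    if s': "g x < s'" for s'
  proof -
    obtain r where r: "r \<in> \<rat>" "g x < r" "r < s'" using Rats_dense_in_real[OF s'] by blast
    obtain s where s: "s \<in> \<rat>" "r < s" "s < s'" using Rats_dense_in_real[OF r(3)] by blast
    have r0: "0 < r" using r nn[of x] by linarith
    have "x \<notin> Eup r s k" using H[OF r(1) s(1) r0 s(2)] by blast
    then have "x \<notin> Bup s" using r(2) xb by (auto simp: Eup_def)
    then obtain n where n: "x \<notin> Wup s (inverse (real (Suc n)))" by (auto simp: Bup_def)
    show ?thesis
    proof (intro exI[of _ "inverse (real (Suc n))"] conjI allI impI)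
      fix u v assume uv: "u < x" "x < v" "v - u < inverse (real (Suc n))"
      then have "G v - G u \<le> s * (v - u)" using n unfolding Wup_def by force
      also have "\<dots> \<le> s' * (v - u)" using uv s by (intro mult_right_mono) auto
      finally show "G v - G u \<le> s' * (v - u)" .
    qed simp
  qed
  have lo: "\<exists>\<delta>>0. \<forall>u v. u < x \<longrightarrow> x < v \<longrightarrow> v - u < \<delta> \<longrightarrow> r' * (v - u) \<le> G v - G u"
    if r': "r' < g x" for r'
  proof (cases "r' \<le> 0")
    case True
    show ?thesis
    proof (intro exI[of _ 1] conjI allI impI)
      fix u v assume uv: "u < x" "x < v" "v - u < 1"
      have "r' * (v - u) \<le> 0" using True uv by (simp add: mult_nonpos_nonneg)
      also have "0 \<le> G v - G u" using G_mono[of u v] uv by simp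
      finally show "r' * (v - u) \<le> G v - G u" .
    qed simp
  next
    case False
    obtain r where r: "r \<in> \<rat>" "r' < r" "r < g x" using Rats_dense_in_real[OF r'] by blast
    obtain s where s: "s \<in> \<rat>" "r < s" "s < g x" using Rats_dense_in_real[OF r(3)] by blast
    have r0: "0 < r" using r False by linarith
    have "x \<notin> Elo r s k" using H[OF r(1) s(1) r0 s(2)] by blast
    then have "x \<notin> Blo r" using s(3) xb by (auto simp: Elo_def)
    then obtain n where n: "x \<notin> Wlo r (inverse (real (Suc n)))" by (auto simp: Blo_def)
    show ?thesis
    proof (intro exI[of _ "inverse (real (Suc n))"] conjI allI impI)
      fix u v assume uv: "u < x" "x < v" "v - u < inverse (real (Suc n))"
      have "r' * (v - u) \<le> r * (v - u)" using uv r by (intro mult_right_mono) auto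
      also have "r * (v - u) \<le> G v - G u" using n uv unfolding Wlo_def by force
      finally show "r' * (v - u) \<le> G v - G u" .
    qed simp
  qed
  have comb: "\<exists>\<delta>>0. \<forall>u v. u < x \<longrightarrow> x < v \<longrightarrow> v - u < \<delta> \<longrightarrow> \<bar>G v - G u - g x * (v - u)\<bar> \<le> \<epsilon> * (v - u)"
    if e: "\<epsilon> > 0" for \<epsilon>
  proof -
    obtain d1 where d1: "d1 > 0" "\<forall>u v. u < x \<longrightarrow> x < v \<longrightarrow> v - u < d1 \<longrightarrow> G v - G u \<le> (g x + \<epsilon>) * (v - u)"
      using up[of "g x + \<epsilon>"] e by auto
    obtain d2 where d2: "d2 > 0" "\<forall>u v. u < x \<longrightarrow> x < v \<longrightarrow> v - u < d2 \<longrightarrow> (g x - \<epsilon>) * (v - u) \<le> G v - G u"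
      using lo[of "g x - \<epsilon>"] e by auto
    show ?thesis
    proof (intro exI[of _ "min d1 d2"] conjI allI impI)
      fix u v assume uv: "u < x" "x < v" "v - u < min d1 d2"
      then have "G v - G u \<le> (g x + \<epsilon>) * (v - u)" "(g x - \<epsilon>) * (v - u) \<le> G v - G u" using d1 d2 by auto
      then show "\<bar>G v - G u - g x * (v - u)\<bar> \<le> \<epsilon> * (v - u)" by (simp add: algebra_simps abs_le_iff)
    qed (use d1 d2 in auto)
  qed
  have cG: "\<And>y. isCont G y" by (rule G_cont)
  have ext: "\<exists>\<delta>>0. \<forall>u v. u \<le> x \<longrightarrow> x \<le> v \<longrightarrow> u < v \<longrightarrow> v - u < \<delta> \<longrightarrow> \<bar>G v - G u - g x * (v - u)\<bar> \<le> \<epsilon> * (v - u)"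
    if e: "\<epsilon> > 0" for \<epsilon>
  proof -
    obtain d where d: "d > 0" "\<forall>u v. u < x \<longrightarrow> x < v \<longrightarrow> v - u < d \<longrightarrow> \<bar>G v - G u - g x * (v - u)\<bar> \<le> \<epsilon> * (v - u)"
      using comb[OF e] by auto
    show ?thesis
    proof (intro exI[of _ d] conjI allI impI d(1))
      fix u v assume uv: "u \<le> x" "x \<le> v" "u < v" "v - u < d"
      show "\<bar>G v - G u - g x * (v - u)\<bar> \<le> \<epsilon> * (v - u)"
      proof (cases "u < x \<and> x < v")
        case True then show ?thesis using d uv by auto
      next
        case False
        then have "u = x \<or> v = x" using uv by auto
        then show ?thesis
        proof
          assume ux: "u = x"
          then have xv: "x < v" using uv by auto
          show ?thesis unfolding ux
          proof (rule lim_le_left[where f = "\<lambda>t. \<bar>G v - G t - g x * (v - t)\<bar>" and h = "\<lambda>t. \<epsilon> * (v - t)"])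
            show "isCont (\<lambda>t. \<bar>G v - G t - g x * (v - t)\<bar>) x" by (intro continuous_intros cG)
            show "isCont (\<lambda>t. \<epsilon> * (v - t)) x" by (intro continuous_intros)
            have "\<forall>\<^sub>F t in at_left x. t \<in> {x - (d - (v - x))<..<x}"
              by (rule eventually_at_left_real) (use uv ux in auto)
            then show "\<forall>\<^sub>F t in at_left x. \<bar>G v - G t - g x * (v - t)\<bar> \<le> \<epsilon> * (v - t)"
              by eventually_elim (use d xv in auto)
          qed
        next
          assume vx: "v = x"
          then have ux: "u < x" using uv by auto
          show ?thesis unfolding vx
          proof (rule lim_le_right[where f = "\<lambda>t. \<bar>G t - G u - g x * (t - u)\<bar>" and h = "\<lambda>t. \<epsilon> * (t - u)"])
            show "isCont (\<lambda>t. \<bar>G t - G u - g x * (t - u)\<bar>) x" by (intro continuous_intros cG)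
            show "isCont (\<lambda>t. \<epsilon> * (t - u)) x" by (intro continuous_intros)
            have "\<forall>\<^sub>F t in at_right x. t \<in> {x<..<x + (d - (x - u))}"
              by (rule eventually_at_right_real) (use uv vx in auto)
            then show "\<forall>\<^sub>F t in at_right x. \<bar>G t - G u - g x * (t - u)\<bar> \<le> \<epsilon> * (t - u)"
              by eventually_elim (use d ux in auto)
          qed
        qed
      qed
    qed
  qed
  show ?thesis unfolding has_field_derivative_iff LIM_eq
  proof (intro allI impI)
    fix \<epsilon> :: real assume e: "\<epsilon> > 0"
    obtain d where d: "d > 0" "\<forall>u v. u \<le> x \<longrightarrow> x \<le> v \<longrightarrow> u < v \<longrightarrow> v - u < d \<longrightarrow> \<bar>G v - G u - g x * (v - u)\<bar> \<le> \<epsilon>/2 * (v - u)"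
      using ext[of "\<epsilon>/2"] e by auto
    show "\<exists>s>0. \<forall>y. y \<noteq> x \<and> norm (y - x) < s \<longrightarrow> norm ((G y - G x) / (y - x) - g x) < \<epsilon>"
    proof (intro exI[of _ d] conjI allI impI d(1))
      fix y assume y: "y \<noteq> x \<and> norm (y - x) < d"
      have eq: "(G y - G x) / (y - x) - g x = (G y - G x - g x * (y - x)) / (y - x)"
        using y by (simp add: field_simps)
      show "norm ((G y - G x) / (y - x) - g x) < \<epsilon>"
      proof (cases "x < y")
        case True
        then have "\<bar>G y - G x - g x * (y - x)\<bar> \<le> \<epsilon>/2 * (y - x)" using d y by auto
        then have "\<bar>G y - G x - g x * (y - x)\<bar> / (y - x) \<le> \<epsilon>/2" using True by (simp add: divide_le_eq)
        then have "\<bar>G y - G x - g x * (y - x)\<bar> / (y - x) < \<epsilon>" using e by linarith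
        then show ?thesis using True by (simp add: eq abs_divide)
      next
        case False
        then have yx: "y < x" using y by auto
        then have "\<bar>G x - G y - g x * (x - y)\<bar> \<le> \<epsilon>/2 * (x - y)" using d y by auto
        moreover have "\<bar>G y - G x - g x * (y - x)\<bar> = \<bar>G x - G y - g x * (x - y)\<bar>" by (simp add: abs_minus_commute algebra_simps)
        ultimately have "\<bar>G y - G x - g x * (y - x)\<bar> / \<bar>y - x\<bar> \<le> \<epsilon>/2" using yx by (simp add: divide_le_eq)
        then have "\<bar>G y - G x - g x * (y - x)\<bar> / \<bar>y - x\<bar> < \<epsilon>" using e by linarith
        then show ?thesis by (simp add: eq abs_divide)
      qed
    qed
  qed
qed

lemma G_deriv_AE: "AE x in lebesgue. (G has_real_derivative g x) (at x)"
proof -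
  have "AE x in lebesgue. \<forall>t::rat\<times>rat\<times>nat. (0 < real_of_rat (fst t) \<and> real_of_rat (fst t) < real_of_rat (fst (snd t))) \<longrightarrow>
      x \<notin> Eup (real_of_rat (fst t)) (real_of_rat (fst (snd t))) (snd (snd t)) \<and>
      x \<notin> Elo (real_of_rat (fst t)) (real_of_rat (fst (snd t))) (snd (snd t))"
    unfolding AE_all_countable
  proof
    fix t :: "rat\<times>rat\<times>nat"
    show "AE x in lebesgue. (0 < real_of_rat (fst t) \<and> real_of_rat (fst t) < real_of_rat (fst (snd t))) \<longrightarrow>
      x \<notin> Eup (real_of_rat (fst t)) (real_of_rat (fst (snd t))) (snd (snd t)) \<and>
      x \<notin> Elo (real_of_rat (fst t)) (real_of_rat (fst (snd t))) (snd (snd t))"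
    proof (cases "0 < real_of_rat (fst t) \<and> real_of_rat (fst t) < real_of_rat (fst (snd t))")
      case True
      have "AE x in lebesgue. x \<notin> Eup (real_of_rat (fst t)) (real_of_rat (fst (snd t))) (snd (snd t))"
        using neg_up[of "real_of_rat (fst t)" "real_of_rat (fst (snd t))" "snd (snd t)"] True
        by (intro AE_not_in) (simp add: negligible_iff_null_sets)
      moreover have "AE x in lebesgue. x \<notin> Elo (real_of_rat (fst t)) (real_of_rat (fst (snd t))) (snd (snd t))"
        using neg_lo[of "real_of_rat (fst t)" "real_of_rat (fst (snd t))" "snd (snd t)"] True
        by (intro AE_not_in) (simp add: negligible_iff_null_sets)
      ultimately show ?thesis by eventually_elim auto
    next
      case False
      show ?thesis by (rule AE_I2) (use False in blast)
    qed
  qed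
  then show ?thesis
  proof eventually_elim
    case (elim x)
    show ?case
    proof (rule deriv_pt)
      fix r s :: real and k :: nat assume rs: "r \<in> \<rat>" "s \<in> \<rat>" "0 < r" "r < s"
      obtain r' where r': "r = real_of_rat r'" using rs(1) Rats_cases by blast
      obtain s' where s': "s = real_of_rat s'" using rs(2) Rats_cases by blast
      show "x \<notin> Eup r s k \<and> x \<notin> Elo r s k" using elim[rule_format, of "(r', s', k)"] rs r' s' by simp
    qed
  qed
qed

end

context nnint begin

lemma sum_ind_le1:
  fixes n :: nat and a b :: "nat \<Rightarrow> real"
  assumes disj: "\<forall>i<n. \<forall>j<n. i \<noteq> j \<longrightarrow> b i \<le> a j \<or> b j \<le> a i"
  shows "(\<Sum>i<n. indicator {a i..<b i} x) \<le> (1::real)"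
proof -
  define I where "I = {i\<in>{..<n}. a i \<le> x \<and> x < b i}"
  have "(\<Sum>i<n. indicator {a i..<b i} x) = (\<Sum>i\<in>I. (1::real))"
    by (rule sum.mono_neutral_cong_right) (auto simp: I_def indicator_def)
  also have "\<dots> = real (card I)" by simp
  also have "card I \<le> Suc 0"
  proof -
    have "finite I" by (simp add: I_def)
    moreover have "\<forall>i\<in>I. \<forall>j\<in>I. i = j"
    proof (intro ballI)
      fix i j assume "i \<in> I" "j \<in> I"
      then show "i = j" using disj unfolding I_def by force
    qed
    ultimately show ?thesis by (simp add: card_le_Suc0_iff_eq)
  qed
  finally show ?thesis by simp
qed

lemma ac_from_bound:
  fixes h :: "real \<Rightarrow> real"
  assumes K: "K \<ge> 0" and M: "M \<ge> 0"
    and bound: "\<And>s t. s \<le> t \<Longrightarrow> \<bar>h t - h s\<bar> \<le> K * (t - s) + M * (G t - G s)"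
  shows "abs_cont_on lo hi h"
  unfolding abs_cont_on_def
proof (intro allI impI)
  fix \<epsilon> :: real assume e: "\<epsilon> > 0"
  obtain N where N: "N \<ge> 0" "(\<integral>x. g x - min (g x) N \<partial>lebesgue) < \<epsilon> / (2 * (M + 1))"
    using trunc_small[OF int nn, of "\<epsilon> / (2 * (M + 1))"] e M by auto
  define \<delta> where "\<delta> = \<epsilon> / (2 * (K + M * N + 1))"
  have KMN: "K + M * N \<ge> 0" using K M N by simp
  have d: "\<delta> > 0" using e KMN by (simp add: \<delta>_def)
  show "\<exists>\<delta>>0. \<forall>(n::nat) a b. (\<forall>i<n. lo \<le> a i \<and> a i \<le> b i \<and> b i \<le> hi) \<and>
        (\<forall>i<n. \<forall>j<n. i \<noteq> j \<longrightarrow> b i \<le> a j \<or> b j \<le> a i) \<and> (\<Sum>i<n. b i - a i) < \<delta>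
        \<longrightarrow> (\<Sum>i<n. \<bar>h (b i) - h (a i)\<bar>) < \<epsilon>"
  proof (intro exI[of _ \<delta>] conjI allI impI d)
    fix n :: nat and a b :: "nat \<Rightarrow> real"
    assume hyp: "(\<forall>i<n. lo \<le> a i \<and> a i \<le> b i \<and> b i \<le> hi) \<and>
        (\<forall>i<n. \<forall>j<n. i \<noteq> j \<longrightarrow> b i \<le> a j \<or> b j \<le> a i) \<and> (\<Sum>i<n. b i - a i) < \<delta>"
    let ?L = "\<Sum>i<n. b i - a i"
    let ?S = "\<Sum>i<n. G (b i) - G (a i)"
    have ab: "\<And>i. i < n \<Longrightarrow> a i \<le> b i" using hyp by auto
    have L0: "?L \<ge> 0" using ab by (intro sum_nonneg) auto
    have "(\<Sum>i<n. \<bar>h (b i) - h (a i)\<bar>) \<le> (\<Sum>i<n. K * (b i - a i) + M * (G (b i) - G (a i)))"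
      by (intro sum_mono bound ab) simp
    also have "\<dots> = K * ?L + M * ?S" by (simp add: sum.distrib sum_distrib_left)
    finally have s1: "(\<Sum>i<n. \<bar>h (b i) - h (a i)\<bar>) \<le> K * ?L + M * ?S" .
    define H where "H = (\<lambda>x. \<Sum>i<n. indicator {a i..<b i} x :: real)"
    have Hm: "H \<in> borel_measurable lebesgue" unfolding H_def by (intro borel_measurable_sum) (simp add: ind_facts(1))
    have Hi: "integrable lebesgue H" unfolding H_def
      by (intro Bochner_Integration.integrable_sum) (simp add: ind_facts(2))
    have HL: "(\<integral>x. H x \<partial>lebesgue) = ?L" unfolding H_def
      by (subst Bochner_Integration.integral_sum) (auto simp: ind_facts(2,3) ab intro!: sum.cong)
    have SH: "?S = (\<integral>x. H x * g x \<partial>lebesgue)"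
    proof -
      have "?S = (\<Sum>i<n. \<integral>x. indicator {a i..<b i} x * g x \<partial>lebesgue)"
        by (intro sum.cong refl G_diff ab) simp
      also have "\<dots> = (\<integral>x. (\<Sum>i<n. indicator {a i..<b i} x * g x) \<partial>lebesgue)"
        by (rule Bochner_Integration.integral_sum[symmetric]) (simp add: int_ind)
      also have "\<dots> = (\<integral>x. H x * g x \<partial>lebesgue)" by (simp add: H_def sum_distrib_right)
      finally show ?thesis .
    qed
    have "?S \<le> (\<integral>x. g x - min (g x) N \<partial>lebesgue) + N * ?L"
      unfolding SH HL[symmetric]
    proof (rule weighted_bound[OF int nn Hm _ _ Hi N(1)])
      show "\<And>x. 0 \<le> H x" unfolding H_def by (intro sum_nonneg) auto
      show "\<And>x. H x \<le> 1" unfolding H_def by (rule sum_ind_le1) (use hyp in blast)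
    qed
    then have "K * ?L + M * ?S \<le> K * ?L + M * ((\<integral>x. g x - min (g x) N \<partial>lebesgue) + N * ?L)"
      using M by (intro add_left_mono mult_left_mono) auto
    also have "\<dots> = (K + M * N) * ?L + M * (\<integral>x. g x - min (g x) N \<partial>lebesgue)" by (simp add: algebra_simps)
    also have "\<dots> \<le> (K + M * N) * \<delta> + M * (\<epsilon> / (2 * (M + 1)))"
      using hyp KMN M N(2) by (intro add_mono mult_left_mono) auto
    also have "\<dots> < \<epsilon>"
    proof -
      have "(K + M * N) * \<delta> = \<epsilon>/2 * ((K + M * N) / (K + M * N + 1))" using KMN by (simp add: \<delta>_def field_simps)
      also have "\<dots> < \<epsilon>/2 * 1" using e KMN by (intro mult_strict_left_mono) auto
      finally have 1: "(K + M * N) * \<delta> < \<epsilon>/2" by simp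
      have "M * (\<epsilon> / (2 * (M + 1))) = \<epsilon>/2 * (M / (M + 1))" using M by (simp add: field_simps)
      also have "\<dots> \<le> \<epsilon>/2 * 1" using e M by (intro mult_left_mono) auto
      finally have 2: "M * (\<epsilon> / (2 * (M + 1))) \<le> \<epsilon>/2" by simp
      from 1 2 show ?thesis by linarith
    qed
    finally show "(\<Sum>i<n. \<bar>h (b i) - h (a i)\<bar>) < \<epsilon>" using s1 by linarith
  qed
qed

end

lemma exp_diff_le: "(s::real) \<le> t \<Longrightarrow> exp t - exp s \<le> exp t * (t - s)"
proof -
  assume st: "s \<le> t"
  have "1 + (s - t) \<le> exp (s - t)" by (rule exp_ge_add_one_self)
  then have "exp t * (1 + (s - t)) \<le> exp t * exp (s - t)" by (intro mult_left_mono) auto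
  also have "exp t * exp (s - t) = exp s" by (simp add: exp_add[symmetric])
  finally show ?thesis by (simp add: algebra_simps)
qed

lemma max0_lip: "\<bar>max 0 (a::real) - max 0 b\<bar> \<le> \<bar>a - b\<bar>" by (simp add: max_def abs_if)

locale constr =
  fixes q :: "real \<Rightarrow> real" and a0 b0 :: real
  assumes q_loc: "\<And>a b. set_integrable lebesgue {a..b} q"
    and q_nonneg: "AE x in lebesgue. 0 \<le> q x"
    and ab: "a0 < b0"
    and int2: "(\<integral>t\<in>{a0..b0}. q t \<partial>lebesgue) \<le> 2"
begin

definition gg :: "real \<Rightarrow> real" where "gg x = indicator {a0..b0} x * max 0 (q x)"

lemma gg_int: "integrable lebesgue gg"
proof -
  have i: "integrable lebesgue (\<lambda>x. indicator {a0..b0} x * q x)"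
    using q_loc[of a0 b0] by (simp add: set_integrable_def)
  have "integrable lebesgue (\<lambda>x. max 0 (indicator {a0..b0} x * q x))"
    by (rule integrable_max) (use i in auto)
  moreover have "(\<lambda>x. max 0 (indicator {a0..b0} x * q x)) = gg"
    by (auto simp: fun_eq_iff gg_def split: split_indicator)
  ultimately show ?thesis by simp
qed

lemma gg_nn: "0 \<le> gg x" by (simp add: gg_def)

sublocale N: nnint gg by unfold_locales (auto simp: gg_int gg_nn)

lemma gg_total: "(\<integral>x. gg x \<partial>lebesgue) \<le> 2"
proof -
  have "(\<integral>x. gg x \<partial>lebesgue) = (\<integral>x. indicator {a0..b0} x * q x \<partial>lebesgue)"
  proof (rule integral_cong_AE)
    show "AE x in lebesgue. gg x = indicator {a0..b0} x * q x"
      using q_nonneg by eventually_elim (auto simp: gg_def split: split_indicator)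
    have i: "integrable lebesgue (\<lambda>x. indicator {a0..b0} x * q x)"
      using q_loc[of a0 b0] by (simp add: set_integrable_def)
    then show "(\<lambda>x. indicator {a0..b0} x * q x) \<in> borel_measurable lebesgue" by auto
  qed (simp add: N.gm)
  also have "\<dots> = (\<integral>t\<in>{a0..b0}. q t \<partial>lebesgue)" by (simp add: set_lebesgue_integral_def)
  finally show ?thesis using int2 by simp
qed

lemma G_le2: "N.G t \<le> 2" using N.G_le gg_total by (rule order_trans)

lemma expG: "1 \<le> exp (N.G t)" "exp (N.G t) \<le> exp 2"
  using N.G_nonneg[of t] G_le2[of t] by auto

definition "DD = (b0 - a0) / 2"
definition "mm = a0 + DD"
definition phi :: "real \<Rightarrow> real" where "phi x = max 0 (1 - \<bar>x - mm\<bar> / DD)"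
definition yy :: "real \<Rightarrow> real" where "yy x = phi x * exp (N.G x)"
definition ff :: "real \<Rightarrow> real" where
  "ff x = (if a0 < x \<and> x < mm then - exp (N.G x) / DD else if mm < x \<and> x < b0 then exp (N.G x) / DD else 0)"

lemma DD_pos: "DD > 0" using ab by (simp add: DD_def)
lemma b0_eq: "b0 = mm + DD" by (simp add: mm_def DD_def)

lemma phi_01: "0 \<le> phi x" "phi x \<le> 1"
  using DD_pos by (auto simp: phi_def)

lemma phi_lip: "\<bar>phi t - phi s\<bar> \<le> \<bar>t - s\<bar> / DD"
proof -
  have "\<bar>phi t - phi s\<bar> \<le> \<bar>(1 - \<bar>t - mm\<bar> / DD) - (1 - \<bar>s - mm\<bar> / DD)\<bar>"
    unfolding phi_def by (rule max0_lip)
  also have "\<dots> = \<bar>(\<bar>s - mm\<bar> - \<bar>t - mm\<bar>) / DD\<bar>" by (simp add: diff_divide_distrib)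
  also have "\<dots> = \<bar>\<bar>s - mm\<bar> - \<bar>t - mm\<bar>\<bar> / DD" using DD_pos by (simp add: abs_divide)
  also have "\<dots> \<le> \<bar>t - s\<bar> / DD" using DD_pos by (intro divide_right_mono) auto
  finally show ?thesis .
qed

lemma yy_ac: "abs_cont_real yy"
  unfolding abs_cont_real_def
proof (intro allI)
  fix lo hi
  show "abs_cont_on lo hi yy"
  proof (rule N.ac_from_bound[of "exp 2 / DD" "exp 2"])
    show "0 \<le> exp 2 / DD" using DD_pos by simp
    show "0 \<le> exp (2::real)" by simp
    fix s t :: real assume st: "s \<le> t"
    have "yy t - yy s = (phi t - phi s) * exp (N.G t) + phi s * (exp (N.G t) - exp (N.G s))"
      by (simp add: yy_def algebra_simps)
    then have "\<bar>yy t - yy s\<bar> \<le> \<bar>phi t - phi s\<bar> * exp (N.G t) + phi s * \<bar>exp (N.G t) - exp (N.G s)\<bar>"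
      using phi_01[of s] by (simp add: abs_mult) (metis abs_triangle_ineq abs_mult abs_of_nonneg exp_ge_zero abs_exp_cancel)
    also have "\<dots> \<le> (t - s) / DD * exp 2 + 1 * (exp 2 * (N.G t - N.G s))"
    proof (intro add_mono mult_mono)
      show "\<bar>phi t - phi s\<bar> \<le> (t - s) / DD" using phi_lip[of t s] st by simp
      show "exp (N.G t) \<le> exp 2" by (rule expG)
      show "phi s \<le> 1" by (rule phi_01)
      have Gm: "N.G s \<le> N.G t" by (rule N.G_mono[OF st])
      have "\<bar>exp (N.G t) - exp (N.G s)\<bar> = exp (N.G t) - exp (N.G s)" using Gm by simp
      also have "\<dots> \<le> exp (N.G t) * (N.G t - N.G s)" by (rule exp_diff_le[OF Gm])
      also have "\<dots> \<le> exp 2 * (N.G t - N.G s)" using Gm expG(2)[of t] by (intro mult_right_mono) auto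
      finally show "\<bar>exp (N.G t) - exp (N.G s)\<bar> \<le> exp 2 * (N.G t - N.G s)" .
    qed (use st DD_pos phi_01 in auto)
    finally show "\<bar>yy t - yy s\<bar> \<le> exp 2 / DD * (t - s) + exp 2 * (N.G t - N.G s)" by (simp add: mult.commute)
  qed
qed

end

context constr begin

lemma yy_zero: "t \<le> a0 \<or> b0 \<le> t \<Longrightarrow> yy t = 0"
  using DD_pos by (auto simp: yy_def phi_def mm_def DD_def field_simps abs_if)

lemma yy_left: "a0 \<le> t \<Longrightarrow> t \<le> mm \<Longrightarrow> yy t = (t - a0) / DD * exp (N.G t)"
  using DD_pos by (auto simp: yy_def phi_def mm_def field_simps abs_if)

lemma yy_right: "mm \<le> t \<Longrightarrow> t \<le> b0 \<Longrightarrow> yy t = (b0 - t) / DD * exp (N.G t)"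
  using DD_pos b0_eq by (auto simp: yy_def phi_def field_simps abs_if)

lemma mm_bounds: "a0 < mm" "mm < b0" using DD_pos b0_eq by (auto simp: mm_def)

lemma sol_pt:
  assumes d: "(N.G has_real_derivative gg x) (at x)" and q0: "0 \<le> q x" and x: "x \<notin> {a0, mm, b0}"
  shows "\<exists>D. (yy has_real_derivative D) (at x) \<and> - D + q x * yy x = ff x"
proof -
  consider "x < a0" | "b0 < x" | "a0 < x \<and> x < mm" | "mm < x \<and> x < b0" using x by fastforce
  then show ?thesis
  proof cases
    case 1
    have "((\<lambda>t. 0) has_real_derivative 0) (at x)" by simp
    then have "(yy has_real_derivative 0) (at x)"
      by (rule has_field_derivative_transform_within_open[of _ _ _ "{..<a0}"]) (use 1 yy_zero in auto)
    moreover have "ff x = 0" "yy x = 0" using 1 mm_bounds by (auto simp: ff_def yy_zero)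
    ultimately show ?thesis by auto
  next
    case 2
    have "((\<lambda>t. 0) has_real_derivative 0) (at x)" by simp
    then have "(yy has_real_derivative 0) (at x)"
      by (rule has_field_derivative_transform_within_open[of _ _ _ "{b0<..}"]) (use 2 yy_zero in auto)
    moreover have "ff x = 0" "yy x = 0" using 2 mm_bounds by (auto simp: ff_def yy_zero)
    ultimately show ?thesis by auto
  next
    case 3
    have gq: "gg x = q x" using 3 q0 mm_bounds by (auto simp: gg_def)
    have "((\<lambda>t. (t - a0) / DD * exp (N.G t)) has_real_derivative
        1 / DD * exp (N.G x) + (x - a0) / DD * (exp (N.G x) * gg x)) (at x)"
      using DD_pos by (auto intro!: derivative_eq_intros d simp: field_simps)
    then have "(yy has_real_derivative 1 / DD * exp (N.G x) + (x - a0) / DD * (exp (N.G x) * gg x)) (at x)"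
      by (rule has_field_derivative_transform_within_open[of _ _ _ "{a0<..<mm}"]) (use 3 yy_left in auto)
    moreover have "- (1 / DD * exp (N.G x) + (x - a0) / DD * (exp (N.G x) * gg x)) + q x * yy x = ff x"
      using 3 by (simp add: yy_left ff_def gq algebra_simps)
    ultimately show ?thesis by blast
  next
    case 4
    have gq: "gg x = q x" using 4 q0 mm_bounds by (auto simp: gg_def)
    have "((\<lambda>t. (b0 - t) / DD * exp (N.G t)) has_real_derivative
        - 1 / DD * exp (N.G x) + (b0 - x) / DD * (exp (N.G x) * gg x)) (at x)"
      using DD_pos by (auto intro!: derivative_eq_intros d simp: field_simps)
    then have "(yy has_real_derivative - 1 / DD * exp (N.G x) + (b0 - x) / DD * (exp (N.G x) * gg x)) (at x)"
      by (rule has_field_derivative_transform_within_open[of _ _ _ "{mm<..<b0}"]) (use 4 yy_right in auto)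
    moreover have "- (- 1 / DD * exp (N.G x) + (b0 - x) / DD * (exp (N.G x) * gg x)) + q x * yy x = ff x"
      using 4 mm_bounds by (simp add: yy_right ff_def gq algebra_simps)
    ultimately show ?thesis by blast
  qed
qed

lemma yy_sol: "is_solution q ff yy"
  unfolding is_solution_def
proof (intro conjI yy_ac)
  have "{a0, mm, b0} \<in> null_sets lebesgue"
    by (simp add: negligible_iff_null_sets[symmetric] negligible_finite)
  from AE_not_in[OF this] N.G_deriv_AE q_nonneg
  show "AE x in lebesgue. \<exists>D. (yy has_real_derivative D) (at x) \<and> - D + q x * yy x = ff x"
    by eventually_elim (rule sol_pt)
qed

end

context constr begin

lemma to_leb: "f \<in> borel_measurable borel \<Longrightarrow> (f::real\<Rightarrow>real) \<in> borel_measurable lebesgue"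
  by (simp add: measurable_completion)

lemma G_meas[measurable]: "N.G \<in> borel_measurable borel"
proof -
  have "mono N.G" by (auto intro!: monoI N.G_mono)
  then show ?thesis by (simp add: borel_measurable_mono)
qed

lemma ff_meas[measurable]: "ff \<in> borel_measurable lebesgue" unfolding ff_def by (rule to_leb) measurable
lemma yy_meas[measurable]: "yy \<in> borel_measurable lebesgue" unfolding yy_def phi_def by (rule to_leb) measurable

lemma ff_bound: "\<bar>ff x\<bar> powr p \<le> (exp 2 / DD) powr p * indicator {a0..b0} x" if p: "p > 0"
proof (cases "x \<in> {a0..b0}")
  case True
  have "\<bar>ff x\<bar> \<le> exp 2 / DD" using DD_pos expG(2)[of x] by (auto simp: ff_def divide_right_mono)
  then show ?thesis using True p by (simp add: powr_mono2)
next
  case False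
  then have "ff x = 0" using mm_bounds by (auto simp: ff_def)
  then show ?thesis using False p by simp
qed

lemma yy_bound: "\<bar>yy x\<bar> powr p \<le> (exp 2) powr p * indicator {a0..b0} x" if p: "p > 0"
proof (cases "x \<in> {a0..b0}")
  case True
  have "\<bar>yy x\<bar> \<le> 1 * exp 2" unfolding yy_def abs_mult
    using phi_01[of x] expG(2)[of x] by (intro mult_mono) auto
  then show ?thesis using True p by (simp add: powr_mono2)
next
  case False
  then have "yy x = 0" using yy_zero by auto
  then show ?thesis using False p by simp
qed

lemma yy_lower: "(1/2) powr p * indicator {mm - DD/2..mm + DD/2} x \<le> \<bar>yy x\<bar> powr p" if p: "p > 0"
proof (cases "x \<in> {mm - DD/2..mm + DD/2}")
  case True
  have "1/2 \<le> phi x" using True DD_pos by (auto simp: phi_def field_simps abs_if)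
  then have "1/2 * 1 \<le> yy x" unfolding yy_def using expG(1)[of x] by (intro mult_mono) auto
  then show ?thesis using True p by (simp add: powr_mono2)
next
  case False
  then show ?thesis by simp
qed

lemma ff_Lp: "in_Lp p ff" and ff_int: "(\<integral>x. \<bar>ff x\<bar> powr p \<partial>lebesgue) \<le> (exp 2 / DD) powr p * (b0 - a0)"
  if p: "p > 0"
proof -
  have mi: "integrable lebesgue (\<lambda>x. (exp 2 / DD) powr p * indicator {a0..b0} x)"
    using ind_facts(2)[of "{a0..b0}"] ab by (intro integrable_mult_right) auto
  have i: "integrable lebesgue (\<lambda>x. \<bar>ff x\<bar> powr p)"
    by (rule Bochner_Integration.integrable_bound[OF mi]) (use ff_bound[OF p] in \<open>auto intro!: AE_I2 order_trans[OF _ abs_ge_self]\<close>, measurable)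
  then show "in_Lp p ff" by (simp add: in_Lp_def)
  have "(\<integral>x. \<bar>ff x\<bar> powr p \<partial>lebesgue) \<le> (\<integral>x. (exp 2 / DD) powr p * indicator {a0..b0} x \<partial>lebesgue)"
    by (rule integral_mono[OF i mi]) (rule ff_bound[OF p])
  also have "\<dots> = (exp 2 / DD) powr p * (b0 - a0)" using ab ind_facts(3)[of "{a0..b0}"] by simp
  finally show "(\<integral>x. \<bar>ff x\<bar> powr p \<partial>lebesgue) \<le> (exp 2 / DD) powr p * (b0 - a0)" .
qed

lemma yy_Lp: "in_Lp p yy" and yy_int: "(1/2) powr p * DD \<le> (\<integral>x. \<bar>yy x\<bar> powr p \<partial>lebesgue)"
  if p: "p > 0"
proof -
  have mi: "integrable lebesgue (\<lambda>x. (exp 2) powr p * indicator {a0..b0} x)"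
    using ind_facts(2)[of "{a0..b0}"] ab by (intro integrable_mult_right) auto
  have i: "integrable lebesgue (\<lambda>x. \<bar>yy x\<bar> powr p)"
    by (rule Bochner_Integration.integrable_bound[OF mi]) (use yy_bound[OF p] in \<open>auto intro!: AE_I2 order_trans[OF _ abs_ge_self]\<close>, measurable)
  then show "in_Lp p yy" by (simp add: in_Lp_def)
  have li: "integrable lebesgue (\<lambda>x. (1/2) powr p * indicator {mm - DD/2..mm + DD/2} x)"
    using ind_facts(2)[of "{mm - DD/2..mm + DD/2}"] DD_pos by (intro integrable_mult_right) auto
  have "(1/2) powr p * DD = (\<integral>x. (1/2) powr p * indicator {mm - DD/2..mm + DD/2} x \<partial>lebesgue)"
    using DD_pos ind_facts(3)[of "{mm - DD/2..mm + DD/2}"] by simp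
  also have "\<dots> \<le> (\<integral>x. \<bar>yy x\<bar> powr p \<partial>lebesgue)"
    by (rule integral_mono[OF li i]) (rule yy_lower[OF p])
  finally show "(1/2) powr p * DD \<le> (\<integral>x. \<bar>yy x\<bar> powr p \<partial>lebesgue)" .
qed

end

context constr begin

lemma DD_bound:
  assumes p: "1 \<le> p" and c: "c > 0"
    and bnd: "Lp_norm p yy \<le> c * Lp_norm p ff"
  shows "DD \<le> 4 * c * exp 2"
proof (rule ccontr)
  assume "\<not> DD \<le> 4 * c * exp 2"
  then have big: "DD > 4 * c * exp 2" by simp
  have p0: "p > 0" using p by simp
  define Iy where "Iy = (\<integral>x. \<bar>yy x\<bar> powr p \<partial>lebesgue)"
  define If where "If = (\<integral>x. \<bar>ff x\<bar> powr p \<partial>lebesgue)"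
  have Iy_low: "(1/2) powr p * DD \<le> Iy" unfolding Iy_def by (rule yy_int[OF p0])
  have If_up: "If \<le> (exp 2 / DD) powr p * (b0 - a0)" unfolding If_def by (rule ff_int[OF p0])
  have Iy0: "0 \<le> Iy" unfolding Iy_def by (rule integral_nonneg_AE) auto
  have If0: "0 \<le> If" unfolding If_def by (rule integral_nonneg_AE) auto
  have b: "Iy powr (1/p) \<le> c * If powr (1/p)" using bnd by (simp add: Lp_norm_def Iy_def If_def)
  have "Iy = (Iy powr (1/p)) powr p" using Iy0 p0 by (simp add: powr_powr)
  also have "\<dots> \<le> (c * If powr (1/p)) powr p" using b p0 by (intro powr_mono2) auto
  also have "\<dots> = c powr p * If" using c If0 p0 by (simp add: powr_mult powr_powr)
  also have "\<dots> \<le> c powr p * ((exp 2 / DD) powr p * (b0 - a0))" using If_up c by (intro mult_left_mono) auto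
  also have "\<dots> = (c * exp 2 / DD) powr p * (2 * DD)"
  proof -
    have e1: "b0 - a0 = 2 * DD" by (simp add: DD_def)
    have e2: "c powr p * (exp 2 / DD) powr p = (c * (exp 2 / DD)) powr p"
      using c DD_pos by (subst powr_mult[symmetric]) auto
    show ?thesis unfolding e1 using e2 by (simp add: mult.assoc[symmetric])
  qed
  finally have "(1/2) powr p * DD \<le> (c * exp 2 / DD) powr p * (2 * DD)" using Iy_low by linarith
  then have ineq: "(1/2) powr p \<le> 2 * (c * exp 2 / DD) powr p" using DD_pos by (simp add: field_simps)
  define Z where "Z = DD / (2 * c * exp 2)"
  have Z2: "Z > 2" using big c by (simp add: Z_def field_simps)
  have X0: "(c * exp 2 / DD) powr p > 0" using c DD_pos by simp
  have "1/2 = Z * (c * exp 2 / DD)" using c DD_pos by (simp add: Z_def field_simps)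
  then have "(1/2) powr p = (Z * (c * exp 2 / DD)) powr p" by (rule arg_cong[where f="\<lambda>t. t powr p"])
  also have "\<dots> = Z powr p * (c * exp 2 / DD) powr p" using Z2 c DD_pos by (intro powr_mult)
  finally have "(1/2) powr p = Z powr p * (c * exp 2 / DD) powr p" .
  with ineq have "Z powr p * (c * exp 2 / DD) powr p \<le> 2 * (c * exp 2 / DD) powr p" by simp
  then have "Z powr p \<le> 2" using X0 by simp
  moreover have "Z powr 1 \<le> Z powr p" using Z2 p by (intro powr_mono) auto
  ultimately show False using Z2 by simp
qed

end

lemma interval_le2:
  fixes q :: "real \<Rightarrow> real"
  assumes q_loc: "\<And>a b. set_integrable lebesgue {a..b} q"
    and D: "D > 0" and dx: "d_fun q x > D"
  shows "(\<integral>t\<in>{x-D..x+D}. q t \<partial>lebesgue) \<le> 2"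
proof (rule ccontr)
  assume "\<not> ?thesis"
  then have big: "(\<integral>t\<in>{x-D..x+D}. q t \<partial>lebesgue) > 2" by simp
  have eqI: "\<And>a b. (\<integral>t\<in>{a..b}. q t \<partial>lebesgue) = integral {a..b} q"
    using set_lebesgue_integral_eq_integral(2)[OF q_loc] by simp
  have intI: "\<And>a b. q integrable_on {a..b}"
    using set_lebesgue_integral_eq_integral(1)[OF q_loc] by simp
  define F where "F d = integral {x-d..x+d} q" for d
  have Fsplit: "F d = integral {x-D..x+d} q - integral {x-D..x-d} q" if "d \<in> {0..D}" for d
    using Henstock_Kurzweil_Integration.integral_combine[of "x-D" "x-d" "x+d" q, OF _ _ intI] that by (simp add: F_def)
  have c1: "continuous_on {0..D} (\<lambda>d. integral {x-D..x+d} q)"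
  proof (rule continuous_on_compose2[OF indefinite_integral_continuous_1[OF intI[of "x-D" "x+D"]], of _ "\<lambda>d. x + d"])
    show "continuous_on {0..D} (\<lambda>d. x + d)" by (intro continuous_intros)
  qed auto
  have c2: "continuous_on {0..D} (\<lambda>d. integral {x-D..x-d} q)"
  proof (rule continuous_on_compose2[OF indefinite_integral_continuous_1[OF intI[of "x-D" "x+D"]], of _ "\<lambda>d. x - d"])
    show "continuous_on {0..D} (\<lambda>d. x - d)" by (intro continuous_intros)
  qed auto
  have cF: "continuous_on {0..D} F"
  proof -
    have "continuous_on {0..D} (\<lambda>d. integral {x-D..x+d} q - integral {x-D..x-d} q)"
      by (intro continuous_on_diff c1 c2)
    then show ?thesis by (rule continuous_on_eq) (simp add: Fsplit)
  qed
  have F0: "F 0 = 0" by (simp add: F_def)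
  have FD: "2 \<le> F D" using big by (simp add: F_def eqI)
  obtain d where d: "0 \<le> d" "d \<le> D" "F d = 2"
    using IVT'[of F 0 2 D, OF _ FD _ cF] F0 D by auto
  have d0: "d > 0" using d F0 by (cases "d = 0") auto
  have "d \<in> {d. d > 0 \<and> (\<integral>t\<in>{x-d..x+d}. q t \<partial>lebesgue) = 2}"
    using d d0 by (simp add: eqI F_def)
  then have "d_fun q x \<le> d" unfolding d_fun_def
    by (rule cInf_lower) (auto intro!: bdd_belowI[of _ 0])
  then show False using dx d by simp
qed

theorem lemma2p3:
  fixes q :: "real \<Rightarrow> real" and p :: real
  assumes q_loc: "\<And>a b. set_integrable lebesgue {a..b} q"
    and q_nonneg: "AE x in lebesgue. 0 \<le> q x"
    and p_ge: "1 \<le> p"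
    and solv: "correctly_solvable q p"
  shows "bdd_above (range (d_fun q))"
proof (rule ccontr)
  assume nb: "\<not> bdd_above (range (d_fun q))"
  obtain c where c: "c > 0" and bnd: "\<And>f y. in_Lp p f \<and> is_solution q f y \<and> in_Lp p y \<Longrightarrow> Lp_norm p y \<le> c * Lp_norm p f"
    using solv unfolding correctly_solvable_def by blast
  define D where "D = 4 * c * exp 2 + 1"
  have D0: "D > 0" using c by (simp add: D_def add_pos_pos)
  obtain x where x: "d_fun q x > D" using nb by (auto simp: bdd_above_def not_le)
  have i2: "(\<integral>t\<in>{x-D..x+D}. q t \<partial>lebesgue) \<le> 2" by (rule interval_le2[OF q_loc D0 x])
  interpret C: constr q "x - D" "x + D"
    by unfold_locales (use q_loc q_nonneg D0 i2 in auto)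
  have p0: "p > 0" using p_ge by simp
  have "Lp_norm p C.yy \<le> c * Lp_norm p C.ff"
    using bnd C.ff_Lp[OF p0] C.yy_sol C.yy_Lp[OF p0] by blast
  then have "C.DD \<le> 4 * c * exp 2" by (rule C.DD_bound[OF p_ge c])
  moreover have "C.DD = D" by (simp add: C.DD_def)
  ultimately show False by (simp add: D_def)
qed

end
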